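(* Let $\alpha\in\{1/2,1\}$, $\beta\in(0,1]$, $\rho\in(0,1)$ and $\tilde\rho=\beta\rho$. The function $\Lambda\mapsto\mathbf M(\Lambda;\rho,\tilde\rho,\alpha)$ on $[0,\gamma_+]$, where $\gamma_+=\bigl(1+\sqrt{(\tilde\rho-\rho\tilde\rho)/(\rho-\rho\tilde\rho)}\bigr)^2$, is convex and attains its minimum at a unique point.
   Context: For $\gamma>0$, $\gamma_\pm=(1\pm\sqrt\gamma)^2$, $p_\gamma(t)=\frac{1}{2\pi\gamma t}\sqrt{(\gamma_+-t)(t-\gamma_-)}\mathbf 1_{[\gamma_-,\gamma_+]}(t)$ (Marčenko–Pastur density), $P_\gamma(x;k)=\int_x^{\gamma_+}t^kp_\gamma(t)dt$, and $\mathbf M(\Lambda;\rho,\tilde\rho,\alpha)=\rho+\tilde\rho-\rho\tilde\rho+(1-\tilde\rho)[\rho\Lambda^2+\alpha(1-\rho)(P_\gamma(\Lambda^2;1)-2\Lambda P_\gamma(\Lambda^2;\frac12)+\Lambda^2P_\gamma(\Lambda^2;0))]$ with $\gamma=(\tilde\rho-\rho\tilde\rho)/(\rho-\rho\tilde\rho)$. *)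

theory Defs
  imports "HOL-Analysis.Analysis"
begin

definition gamma_plus :: "real \<Rightarrow> real" where
  "gamma_plus \<gamma> = (1 + sqrt \<gamma>)\<^sup>2"

definition gamma_minus :: "real \<Rightarrow> real" where
  "gamma_minus \<gamma> = (1 - sqrt \<gamma>)\<^sup>2"

definition mp_density :: "real \<Rightarrow> real \<Rightarrow> real" where
  "mp_density \<gamma> t =
     (if gamma_minus \<gamma> \<le> t \<and> t \<le> gamma_plus \<gamma>
      then sqrt ((gamma_plus \<gamma> - t) * (t - gamma_minus \<gamma>)) / (2 * pi * \<gamma> * t)
      else 0)"

definition mp_tail :: "real \<Rightarrow> real \<Rightarrow> real \<Rightarrow> real" where
  "mp_tail \<gamma> x k = (LINT t:{x..gamma_plus \<gamma>}|lborel. t powr k * mp_density \<gamma> t)"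

definition mp_gamma :: "real \<Rightarrow> real \<Rightarrow> real" where
  "mp_gamma \<rho> \<rho>t = (\<rho>t - \<rho> * \<rho>t) / (\<rho> - \<rho> * \<rho>t)"

definition MM :: "real \<Rightarrow> real \<Rightarrow> real \<Rightarrow> real \<Rightarrow> real" where
  "MM \<Lambda> \<rho> \<rho>t \<alpha> =
     (let \<gamma> = mp_gamma \<rho> \<rho>t in
      \<rho> + \<rho>t - \<rho> * \<rho>t + (1 - \<rho>t) * (\<rho> * \<Lambda>\<^sup>2 + \<alpha> * (1 - \<rho>) *
        (mp_tail \<gamma> (\<Lambda>\<^sup>2) 1 - 2 * \<Lambda> * mp_tail \<gamma> (\<Lambda>\<^sup>2) (1/2)
         + \<Lambda>\<^sup>2 * mp_tail \<gamma> (\<Lambda>\<^sup>2) 0)))"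

end

theory Submission
  imports Defs
begin


lemma p_meas: "mp_density g \<in> borel_measurable lborel"
  unfolding mp_density_def by measurable

lemma p_nonneg: "0 < g \<Longrightarrow> 0 \<le> mp_density g t"
proof -
  assume g: "0 < g"
  have h: "0 \<le> (1 - sqrt g)\<^sup>2" by simp
  show ?thesis
  proof (cases "(1 - sqrt g)\<^sup>2 \<le> t")
    case True
    hence "0 \<le> t" using h by linarith
    thus ?thesis using g by (simp add: mp_density_def)
  qed (simp add: mp_density_def gamma_minus_def)
qed

lemma p_zero: "t \<notin> {0..gamma_plus g} \<Longrightarrow> mp_density g t = 0"
proof -
  assume t: "t \<notin> {0..gamma_plus g}"
  have h: "0 \<le> (1 - sqrt g)\<^sup>2" by simp
  show ?thesis unfolding mp_density_def gamma_minus_def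
  proof (rule if_not_P)
    show "\<not> ((1 - sqrt g)\<^sup>2 \<le> t \<and> t \<le> gamma_plus g)"
    proof
      assume a: "(1 - sqrt g)\<^sup>2 \<le> t \<and> t \<le> gamma_plus g"
      hence "0 \<le> t" using h by linarith
      thus False using a t by auto
    qed
  qed
qed

lemma p_integrable:
  assumes g: "0 < g" shows "integrable lborel (mp_density g)"
proof -
  define G where "G = gamma_plus g"
  define C where "C = sqrt G / (2 * pi * g)"
  have G0: "0 \<le> G" unfolding G_def gamma_plus_def by simp
  have C0: "0 \<le> C" unfolding C_def using g G0 by simp
  have "(\<lambda>t. t powr (-1/2)) integrable_on {0..G}"
    by (rule integrable_on_powr_from_0) (use G0 in auto)
  hence "(\<lambda>t. t powr (-1/2)) absolutely_integrable_on {0..G}"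
    by (subst absolutely_integrable_on_iff_nonneg) auto
  from integrable_mult_right[OF this [unfolded set_integrable_def], of C]
  have I: "integrable lborel (\<lambda>x. indicat_real {0..G} x *\<^sub>R (C * x powr (-1/2)))"
    by (subst (asm) integrable_completion) (auto simp: mult_ac)
  show ?thesis
  proof (rule Bochner_Integration.integrable_bound[OF I p_meas AE_I2])
    fix t :: real
    show "norm (mp_density g t) \<le> norm (indicat_real {0..G} t *\<^sub>R (C * t powr (-1/2)))"
    proof (cases "t \<in> {0..G} \<and> gamma_minus g \<le> t \<and> 0 < t")
      case True
      hence t: "0 < t" "t \<le> G" "gamma_minus g \<le> t" by auto
      have gm: "0 \<le> gamma_minus g" unfolding gamma_minus_def by simp
      have "(G - t) * (t - gamma_minus g) \<le> G * t"
        using t gm G0 by (intro mult_mono) auto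
      hence "sqrt ((G - t) * (t - gamma_minus g)) \<le> sqrt (G * t)" by simp
      hence "mp_density g t \<le> sqrt (G * t) / (2 * pi * g * t)"
        unfolding mp_density_def using t g by (auto simp: G_def intro!: divide_right_mono)
      also have "sqrt (G * t) / (2 * pi * g * t) = C * t powr (-1/2)"
        using t g unfolding C_def
        by (simp add: real_sqrt_mult powr_minus powr_half_sqrt field_simps)
      finally show ?thesis using p_nonneg[OF g, of t] True C0 by simp
    next
      case False
      hence "mp_density g t = 0"
        using p_zero[of t g] unfolding mp_density_def G_def by auto
      thus ?thesis by simp
    qed
  qed
qed


lemma int_bound:
  assumes g: "0 < g" and f: "f \<in> borel_measurable lborel"
    and B: "\<And>t. t \<in> {0..gamma_plus g} \<Longrightarrow> \<bar>f t\<bar> \<le> B"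
  shows "integrable lborel (\<lambda>t. f t * mp_density g t)"
proof (rule Bochner_Integration.integrable_bound[OF _ _ AE_I2])
  show "integrable lborel (\<lambda>t. B * mp_density g t)"
    using p_integrable[OF g] by simp
  show "(\<lambda>t. f t * mp_density g t) \<in> borel_measurable lborel"
    using f p_meas by measurable
  fix t :: real
  show "norm (f t * mp_density g t) \<le> norm (B * mp_density g t)"
  proof (cases "t \<in> {0..gamma_plus g}")
    case True
    have "\<bar>f t\<bar> * mp_density g t \<le> B * mp_density g t"
      using B[OF True] p_nonneg[OF g] by (intro mult_right_mono) auto
    moreover have "0 \<le> B" using B[OF True] by linarith
    ultimately show ?thesis using p_nonneg[OF g, of t] by (simp add: abs_mult)
  next
    case False thus ?thesis using p_zero by simp
  qed
qed

definition hh :: "real \<Rightarrow> real \<Rightarrow> real" where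
  "hh L t = (max 0 (sqrt t - L))\<^sup>2"

lemma hh_meas[measurable]: "hh L \<in> borel_measurable lborel"
  unfolding hh_def by measurable

lemma hh_bound: "0 \<le> L \<Longrightarrow> 0 \<le> t \<Longrightarrow> \<bar>hh L t\<bar> \<le> t"
proof -
  assume L: "0 \<le> L" and t: "0 \<le> t"
  have "max 0 (sqrt t - L) \<le> sqrt t" using L t by simp
  hence "(max 0 (sqrt t - L))\<^sup>2 \<le> (sqrt t)\<^sup>2" by (intro power_mono) auto
  thus ?thesis using t by (simp add: hh_def)
qed

lemma le_sq1: "(x::real) \<le> 1 + x\<^sup>2"
proof -
  have "0 \<le> (x - 1)\<^sup>2" by simp
  thus ?thesis by (simp add: power2_eq_square algebra_simps) (smt (verit) zero_le_square)
qed

lemma powr_meas: "(\<lambda>t::real. t powr k) \<in> borel_measurable lborel"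
  by measurable

lemma tail_int:
  assumes g: "0 < g" and k: "k \<in> {0, 1/2, 1}"
  shows "integrable lborel (\<lambda>t. indicator {x..gamma_plus g} t * t powr k * mp_density g t)"
proof (rule int_bound[OF g])
  show "(\<lambda>t. indicator {x..gamma_plus g} t * t powr k) \<in> borel_measurable lborel"
    by (intro borel_measurable_times borel_measurable_indicator powr_meas) simp
  fix t assume t: "t \<in> {0..gamma_plus g}"
  have t0: "0 \<le> t" and tG: "t \<le> gamma_plus g" using t by auto
  have G1: "sqrt (gamma_plus g) \<le> 1 + gamma_plus g"
    using le_sq1[of "sqrt (gamma_plus g)"] t0 tG by simp
  have "\<bar>t powr k\<bar> \<le> 1 + gamma_plus g"
  proof -
    consider "k = 0" | "k = 1/2" | "k = 1" using k by blast
    thus ?thesis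
    proof cases
      case 1 thus ?thesis using t0 tG by simp
    next
      case 2
      have "sqrt t \<le> sqrt (gamma_plus g)" using tG by simp
      hence "sqrt t \<le> 1 + gamma_plus g" using G1 by linarith
      thus ?thesis using t0 by (simp add: 2 powr_half_sqrt)
    next
      case 3 thus ?thesis using t0 tG by simp
    qed
  qed
  moreover have "0 \<le> 1 + gamma_plus g" using t0 tG by simp
  ultimately show "\<bar>indicator {x..gamma_plus g} t * t powr k\<bar> \<le> 1 + gamma_plus g"
    by (auto simp: indicator_def)
qed

lemma hh_int:
  assumes g: "0 < g" and L: "0 \<le> L"
  shows "integrable lborel (\<lambda>t. hh L t * mp_density g t)"
proof (rule int_bound[OF g hh_meas, of _ "gamma_plus g"])
  fix t assume "t \<in> {0..gamma_plus g}"
  thus "\<bar>hh L t\<bar> \<le> gamma_plus g" using hh_bound[OF L, of t] by auto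
qed

lemma tail_eq:
  "mp_tail g x k = integral\<^sup>L lborel (\<lambda>t. indicator {x..gamma_plus g} t * t powr k * mp_density g t)"
  unfolding mp_tail_def set_lebesgue_integral_def by (simp add: mult.assoc)

definition inner_fn :: "real \<Rightarrow> real \<Rightarrow> real" where
  "inner_fn g L = mp_tail g (L\<^sup>2) 1 - 2 * L * mp_tail g (L\<^sup>2) (1/2) + L\<^sup>2 * mp_tail g (L\<^sup>2) 0"

lemma inner_eq:
  assumes g: "0 < g" and L: "0 \<le> L"
  shows "inner_fn g L = integral\<^sup>L lborel (\<lambda>t. hh L t * mp_density g t)"
proof -
  let ?G = "gamma_plus g"
  let ?f = "\<lambda>k t. indicator {L\<^sup>2..?G} t * t powr k * mp_density g t"
  have I: "integrable lborel (?f k)" if "k \<in> {0, 1/2, 1}" for k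
    using tail_int[OF g that] .
  have "inner_fn g L = integral\<^sup>L lborel (\<lambda>t. ?f 1 t - 2 * L * ?f (1/2) t + L\<^sup>2 * ?f 0 t)"
    unfolding inner_fn_def tail_eq
    using I[of 0] I[of 1] I[of "1/2"] by simp
  also have "\<dots> = integral\<^sup>L lborel (\<lambda>t. hh L t * mp_density g t)"
  proof (rule Bochner_Integration.integral_cong[OF refl])
    fix t :: real
    show "?f 1 t - 2 * L * ?f (1/2) t + L\<^sup>2 * ?f 0 t = hh L t * mp_density g t"
    proof (cases "mp_density g t = 0")
      case True thus ?thesis by simp
    next
      case False
      have "t \<noteq> 0"
      proof
        assume "t = 0"
        hence "mp_density g t = 0" by (simp add: mp_density_def)
        thus False using False by simp
      qed
      moreover have "0 \<le> t" using False p_zero[of t g] by force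
      ultimately have t0: "0 < t" by simp
      have tG: "t \<le> ?G" using False p_zero[of t g] by auto
      show ?thesis
      proof (cases "L\<^sup>2 \<le> t")
        case True
        hence "L \<le> sqrt t" using L real_le_rsqrt by blast
        hence "hh L t = (sqrt t - L)\<^sup>2" by (simp add: hh_def)
        also have "\<dots> = t - 2 * L * sqrt t + L\<^sup>2"
          using t0 by (simp add: power2_eq_square algebra_simps)
        finally have e: "hh L t = t - 2 * L * sqrt t + L\<^sup>2" .
        show ?thesis using True tG t0
          by (simp add: indicator_def powr_half_sqrt e algebra_simps)
      next
        case False
        have "sqrt t < L"
        proof (rule ccontr)
          assume "\<not> sqrt t < L"
          hence "L\<^sup>2 \<le> (sqrt t)\<^sup>2" using L by (intro power_mono) auto
          thus False using t0 False by simp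
        qed
        hence "hh L t = 0" by (simp add: hh_def)
        thus ?thesis using False by (simp add: indicator_def)
      qed
    qed
  qed
  finally show ?thesis .
qed



lemma sq_convex: "((1-u)*x + u*y)\<^sup>2 = (1-u)*x\<^sup>2 + u*y\<^sup>2 - u*(1-u)*(x-y)\<^sup>2"
  for u x y :: real
  by (simp add: power2_eq_square) algebra

lemma hh_convex:
  assumes u: "0 \<le> u" "u \<le> 1"
  shows "hh ((1-u)*a + u*b) t \<le> (1-u)*hh a t + u*hh b t"
proof -
  define s where "s = sqrt t"
  define fa where "fa = max 0 (s - a)"
  define fb where "fb = max 0 (s - b)"
  define X where "X = (1-u)*fa + u*fb"
  have "s - ((1-u)*a + u*b) = (1-u)*(s-a) + u*(s-b)" by (simp add: algebra_simps)
  also have "\<dots> \<le> X" unfolding X_def fa_def fb_def using u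
    by (intro add_mono mult_left_mono) auto
  finally have 1: "s - ((1-u)*a + u*b) \<le> X" .
  have 2: "0 \<le> X" unfolding X_def fa_def fb_def using u by auto
  have "hh ((1-u)*a + u*b) t = (max 0 (s - ((1-u)*a + u*b)))\<^sup>2" by (simp add: hh_def s_def)
  also have "\<dots> \<le> X\<^sup>2" using 1 2 by (intro power_mono) auto
  also have "\<dots> = (1-u)*fa\<^sup>2 + u*fb\<^sup>2 - u*(1-u)*(fa-fb)\<^sup>2" unfolding X_def by (rule sq_convex)
  also have "\<dots> \<le> (1-u)*fa\<^sup>2 + u*fb\<^sup>2" using u by simp
  also have "\<dots> = (1-u)*hh a t + u*hh b t" by (simp add: hh_def fa_def fb_def s_def)
  finally show ?thesis .
qed

lemma hh_lip:
  assumes a: "0 \<le> a" and b: "0 \<le> b" and t: "0 \<le> t" "t \<le> G"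
  shows "\<bar>hh a t - hh b t\<bar> \<le> 2 * sqrt G * \<bar>a - b\<bar>"
proof -
  define s where "s = sqrt t"
  define fa where "fa = max 0 (s - a)"
  define fb where "fb = max 0 (s - b)"
  have s0: "0 \<le> s" and sG: "s \<le> sqrt G" using t by (auto simp: s_def)
  have fa: "0 \<le> fa" "fa \<le> s" unfolding fa_def using a s0 by auto
  have fb: "0 \<le> fb" "fb \<le> s" unfolding fb_def using b s0 by auto
  have d: "\<bar>fa - fb\<bar> \<le> \<bar>a - b\<bar>" unfolding fa_def fb_def by (auto simp: abs_if max_def)
  have "\<bar>hh a t - hh b t\<bar> = \<bar>fa - fb\<bar> * (fa + fb)"
  proof -
    have "hh a t = fa\<^sup>2" "hh b t = fb\<^sup>2" by (simp_all add: hh_def fa_def fb_def s_def)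
    hence "hh a t - hh b t = (fa - fb) * (fa + fb)" by (simp add: power2_eq_square algebra_simps)
    thus ?thesis using fa fb by (simp add: abs_mult)
  qed
  also have "\<dots> \<le> \<bar>a - b\<bar> * (2 * sqrt G)"
    using d fa fb sG by (intro mult_mono) auto
  finally show ?thesis by (simp add: algebra_simps)
qed



lemma inner_convex:
  assumes g: "0 < g" and a: "0 \<le> a" and b: "0 \<le> b" and u: "0 \<le> u" "u \<le> 1"
  shows "inner_fn g ((1-u)*a + u*b) \<le> (1-u) * inner_fn g a + u * inner_fn g b"
proof -
  have c: "0 \<le> (1-u)*a + u*b" using a b u by simp
  have "inner_fn g ((1-u)*a + u*b) = integral\<^sup>L lborel (\<lambda>t. hh ((1-u)*a + u*b) t * mp_density g t)"
    by (rule inner_eq[OF g c])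
  also have "\<dots> \<le> integral\<^sup>L lborel (\<lambda>t. (1-u) * (hh a t * mp_density g t) + u * (hh b t * mp_density g t))"
  proof (rule integral_mono)
    show "integrable lborel (\<lambda>t. hh ((1-u)*a + u*b) t * mp_density g t)" by (rule hh_int[OF g c])
    show "integrable lborel (\<lambda>t. (1-u) * (hh a t * mp_density g t) + u * (hh b t * mp_density g t))"
      using hh_int[OF g a] hh_int[OF g b] by simp
    fix t
    have "hh ((1-u)*a + u*b) t * mp_density g t \<le> ((1-u)*hh a t + u*hh b t) * mp_density g t"
      by (rule mult_right_mono[OF hh_convex[OF u] p_nonneg[OF g]])
    thus "hh ((1-u)*a + u*b) t * mp_density g t \<le> (1-u) * (hh a t * mp_density g t) + u * (hh b t * mp_density g t)"
      by (simp add: algebra_simps)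
  qed
  also have "\<dots> = (1-u) * inner_fn g a + u * inner_fn g b"
    using hh_int[OF g a] hh_int[OF g b] by (simp add: inner_eq[OF g a] inner_eq[OF g b])
  finally show ?thesis .
qed

lemma inner_lip:
  assumes g: "0 < g" and a: "0 \<le> a" and b: "0 \<le> b"
  shows "\<bar>inner_fn g a - inner_fn g b\<bar> \<le> (2 * sqrt (gamma_plus g) * integral\<^sup>L lborel (mp_density g)) * \<bar>a - b\<bar>"
proof -
  let ?G = "gamma_plus g"
  have "inner_fn g a - inner_fn g b = integral\<^sup>L lborel (\<lambda>t. (hh a t - hh b t) * mp_density g t)"
    using hh_int[OF g a] hh_int[OF g b]
    by (simp add: inner_eq[OF g a] inner_eq[OF g b] left_diff_distrib)
  hence "\<bar>inner_fn g a - inner_fn g b\<bar> \<le> integral\<^sup>L lborel (\<lambda>t. norm ((hh a t - hh b t) * mp_density g t))"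
    using integral_norm_bound[of lborel "\<lambda>t. (hh a t - hh b t) * mp_density g t"] by simp
  also have "\<dots> \<le> integral\<^sup>L lborel (\<lambda>t. (2 * sqrt ?G * \<bar>a - b\<bar>) * mp_density g t)"
  proof (rule integral_mono)
    show "integrable lborel (\<lambda>t. norm ((hh a t - hh b t) * mp_density g t))"
      using hh_int[OF g a] hh_int[OF g b] by (intro integrable_norm) (simp add: left_diff_distrib)
    show "integrable lborel (\<lambda>t. (2 * sqrt ?G * \<bar>a - b\<bar>) * mp_density g t)"
      using p_integrable[OF g] by simp
    fix t
    show "norm ((hh a t - hh b t) * mp_density g t) \<le> (2 * sqrt ?G * \<bar>a - b\<bar>) * mp_density g t"
    proof (cases "t \<in> {0..?G}")
      case True
      thus ?thesis using hh_lip[OF a b, of t ?G] p_nonneg[OF g, of t]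
        by (auto simp: abs_mult intro: mult_right_mono)
    next
      case False thus ?thesis using p_zero by simp
    qed
  qed
  also have "\<dots> = (2 * sqrt ?G * integral\<^sup>L lborel (mp_density g)) * \<bar>a - b\<bar>"
    by simp
  finally show ?thesis .
qed

lemma inner_cont:
  assumes g: "0 < g"
  shows "continuous_on {0..gamma_plus g} (inner_fn g)"
proof (rule lipschitz_on_continuous_on)
  let ?K = "2 * sqrt (gamma_plus g) * integral\<^sup>L lborel (mp_density g)"
  show "?K-lipschitz_on {0..gamma_plus g} (inner_fn g)"
  proof (rule lipschitz_onI)
    fix x y assume "x \<in> {0..gamma_plus g}" "y \<in> {0..gamma_plus g}"
    thus "dist (inner_fn g x) (inner_fn g y) \<le> ?K * dist x y"
      using inner_lip[OF g, of x y] by (simp add: dist_real_def)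
  next
    have "0 \<le> integral\<^sup>L lborel (mp_density g)"
      using p_nonneg[OF g] by (intro integral_nonneg_AE) auto
    moreover have "0 \<le> sqrt (gamma_plus g)" unfolding gamma_plus_def by simp
    ultimately show "0 \<le> ?K" by simp
  qed
qed



theorem lemma9:
  fixes \<alpha> \<beta> \<rho> :: real
  assumes "\<alpha> \<in> {1/2, 1}" and "0 < \<beta>" and "\<beta> \<le> 1" and "0 < \<rho>" and "\<rho> < 1"
  shows "convex_on {0..gamma_plus (mp_gamma \<rho> (\<beta> * \<rho>))} (\<lambda>\<Lambda>. MM \<Lambda> \<rho> (\<beta> * \<rho>) \<alpha>)
       \<and> (\<exists>!\<Lambda>. \<Lambda> \<in> {0..gamma_plus (mp_gamma \<rho> (\<beta> * \<rho>))} \<and>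
            (\<forall>\<Lambda>'\<in>{0..gamma_plus (mp_gamma \<rho> (\<beta> * \<rho>))}.
               MM \<Lambda> \<rho> (\<beta> * \<rho>) \<alpha> \<le> MM \<Lambda>' \<rho> (\<beta> * \<rho>) \<alpha>))"
proof -
  define g where "g = mp_gamma \<rho> (\<beta> * \<rho>)"
  define G where "G = gamma_plus g"
  define c1 where "c1 = 1 - \<beta> * \<rho>"
  define c2 where "c2 = \<alpha> * (1 - \<rho>)"
  define k0 where "k0 = \<rho> + \<beta> * \<rho> - \<rho> * (\<beta> * \<rho>)"
  define F where "F = (\<lambda>L. MM L \<rho> (\<beta> * \<rho>) \<alpha>)"
  have "\<beta> * \<rho> \<le> 1 * \<rho>" using assms by (intro mult_right_mono) auto
  hence br: "\<beta> * \<rho> < 1" using assms by linarith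
  have c1: "0 < c1" unfolding c1_def using br by simp
  have c2: "0 \<le> c2" unfolding c2_def using assms by auto
  have g: "0 < g"
  proof -
    have "0 < \<beta> * \<rho> * (1 - \<rho>)" using assms by simp
    moreover have "0 < \<rho> * (1 - \<beta> * \<rho>)" using assms br by simp
    ultimately have "0 < (\<beta> * \<rho> * (1 - \<rho>)) / (\<rho> * (1 - \<beta> * \<rho>))" by (rule divide_pos_pos)
    moreover have "\<beta> * \<rho> - \<rho> * (\<beta> * \<rho>) = \<beta> * \<rho> * (1 - \<rho>)"
      "\<rho> - \<rho> * (\<beta> * \<rho>) = \<rho> * (1 - \<beta> * \<rho>)" by (simp_all add: algebra_simps)
    ultimately show ?thesis unfolding g_def mp_gamma_def by metis
  qed
  have G0: "0 \<le> G" unfolding G_def gamma_plus_def by simp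
  have Feq: "F L = k0 + c1 * (\<rho> * L\<^sup>2 + c2 * inner_fn g L)" for L
    unfolding F_def MM_def Let_def inner_fn_def g_def k0_def c1_def c2_def by simp
  have key: "F ((1-u)*x + u*y) \<le> (1-u) * F x + u * F y - c1 * \<rho> * (u*(1-u)*(x-y)\<^sup>2)"
    if x: "x \<in> {0..G}" and y: "y \<in> {0..G}" and u: "0 \<le> u" "u \<le> 1" for x y u
  proof -
    have I: "inner_fn g ((1-u)*x + u*y) \<le> (1-u) * inner_fn g x + u * inner_fn g y"
      using inner_convex[OF g _ _ u, of x y] x y by auto
    have mI: "c1 * c2 * inner_fn g ((1-u)*x + u*y) \<le> c1 * c2 * ((1-u) * inner_fn g x + u * inner_fn g y)"
      using I c1 c2 by (intro mult_left_mono) auto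
    have sq: "((1-u)*x + u*y)\<^sup>2 = (1-u)*x\<^sup>2 + u*y\<^sup>2 - u*(1-u)*(x-y)\<^sup>2" by (rule sq_convex)
    have e3: "F ((1-u)*x + u*y) = k0 + c1*\<rho>*((1-u)*x + u*y)\<^sup>2 + c1 * c2 * inner_fn g ((1-u)*x + u*y)"
      unfolding Feq by (simp add: distrib_left mult.assoc)
    moreover have "F ((1-u)*x + u*y) = k0 + c1*\<rho>*((1-u)*x\<^sup>2 + u*y\<^sup>2 - u*(1-u)*(x-y)\<^sup>2) + c1 * c2 * inner_fn g ((1-u)*x + u*y)"
      by (simp only: e3 sq)
    moreover have "(1-u) * F x + u * F y - c1 * \<rho> * (u*(1-u)*(x-y)\<^sup>2)
       = k0 + c1*\<rho>*((1-u)*x\<^sup>2 + u*y\<^sup>2 - u*(1-u)*(x-y)\<^sup>2) + c1 * c2 * ((1-u) * inner_fn g x + u * inner_fn g y)"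
      unfolding Feq by algebra
    ultimately show ?thesis using mI by linarith
  qed
  have conv: "convex_on {0..G} F"
  proof (rule convex_onI)
    fix t x y :: real assume "0 < t" "t < 1" "x \<in> {0..G}" "y \<in> {0..G}"
    moreover have "0 \<le> c1 * \<rho> * (t*(1-t)*(x-y)\<^sup>2)" using c1 assms \<open>0 < t\<close> \<open>t < 1\<close> by simp
    ultimately show "F ((1 - t) *\<^sub>R x + t *\<^sub>R y) \<le> (1 - t) * F x + t * F y"
      using key[of x y t] by simp
  qed simp
  have cont: "continuous_on {0..G} F"
    unfolding Feq[abs_def] G_def using inner_cont[OF g] by (intro continuous_intros)
  obtain m where m: "m \<in> {0..G}" "\<forall>y\<in>{0..G}. F m \<le> F y"
    using continuous_attains_inf[OF compact_Icc _ cont] G0 by auto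
  have uniq: "z = m" if z: "z \<in> {0..G}" "\<forall>y\<in>{0..G}. F z \<le> F y" for z
  proof (rule ccontr)
    assume ne: "z \<noteq> m"
    define w where "w = (1 - 1/2) * z + 1/2 * m"
    define D where "D = c1 * \<rho> * (1/2*(1-1/2)*(z-m)\<^sup>2)"
    have mid: "w \<in> {0..G}" using z m unfolding w_def by auto
    have k1: "F w \<le> (1 - 1/2) * F z + 1/2 * F m - D"
      unfolding w_def D_def by (rule key) (use z m in auto)
    have k2: "0 < D" unfolding D_def using c1 assms ne by simp
    have k3: "F z \<le> F m" using z(2) m(1) by blast
    have k4: "F m \<le> F w" using m(2) mid by blast
    have k1': "F w \<le> 1/2 * F z + 1/2 * F m - D" using k1 by (simp add: field_simps)
    from k1' k2 k3 k4 show False by linarith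
  qed
  have "\<exists>!L. L \<in> {0..G} \<and> (\<forall>L'\<in>{0..G}. F L \<le> F L')"
    using m uniq by blast
  with conv show ?thesis unfolding F_def G_def g_def by simp
qed

end
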